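(* Let $X$ be a set, $\mathcal{F}\subseteq\mathcal{P}(X)$ a field, $\mathcal{E}\subseteq\mathcal{F}$ an arbitrary subset, and $(\mu^+,\mu^-)$ a conjugate pair of set functions on $\mathcal{F}$ such that $\mu^+(A)=\mu^-(A)$ for all $A\in\mathcal{E}$. Then $(\mathcal{E}, d_{\mu^+})$ is complete if and only if: for every sequence $(A_i)_{i\in\mathbb{N}}$ in $\mathcal{E}$ such that the nets $\{\mu^+(\bigcap_{k=i}^j A_k): i\le j\}$ and $\{\mu^-(\bigcap_{k=i}^j A_k): i\le j\}$ converge to a common limit $L$, the net $\{\bigcap_{k=i}^j A_k: i\le j\}$ converges in $d_{\mu^+}$ to some $A\in\mathcal{E}$ with $\mu^+(A)=L$.
   Context: A field is a family of subsets of $X$ containing $\emptyset$ and closed under complements and finite unions. $I_A$ denotes the indicator function of $A$. Consider $\mu^+,\mu^-:\mathcal{F}\to[0,1]$ with $\mu^\pm(\emptyset)=0$ and $\mu^\pm(X)=1$. $\mu^+$ is subadditive if $I_A\le I_B+I_C\implies \mu^+(A)\le\mu^+(B)+\mu^+(C)$; $\mu^-$ is superadditive if $I_A\ge I_B+I_C\implies\mu^-(A)\ge\mu^-(B)+\mu^-(C)$; $\mu^-$ is co-subadditive with respect to $\mu^+$ if $I_A\le I_B+I_C\implies\mu^-(A)\le\mu^-(B)+\mu^+(C)$; $\mu^+$ is co-superadditive with respect to $\mu^-$ if $I_A\ge I_B+I_C\implies\mu^+(A)\ge\mu^+(B)+\mu^-(C)$ (all for $A,B,C\in\mathcal{F}$).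 The pair $(\mu^+,\mu^-)$ is conjugate if all four properties hold. $d_{\mu^+}(A,B):=\mu^+(A\triangle B)$. Indices range over $i,j\in\mathbb{N}$ with $i\le j$, directed by the product order $(i,j)\le(k,l)\iff i\le k$ and $j\le l$. *)

theory Defs
  imports "HOL-Analysis.Analysis"
begin

text \<open>Fields of subsets of X are the library's algebra X F
  (F \<subseteq> Pow X, {} in F, closed under finite unions and complements).\<close>

definition subadditive :: "'a set \<Rightarrow> 'a set set \<Rightarrow> ('a set \<Rightarrow> real) \<Rightarrow> bool" where
  "subadditive X F mu \<longleftrightarrow> (\<forall>A\<in>F. \<forall>B\<in>F. \<forall>C\<in>F.
     (\<forall>x\<in>X. (indicator A x :: real) \<le> indicator B x + indicator C x) \<longrightarrow> mu A \<le> mu B + mu C)"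

definition superadditive :: "'a set \<Rightarrow> 'a set set \<Rightarrow> ('a set \<Rightarrow> real) \<Rightarrow> bool" where
  "superadditive X F mu \<longleftrightarrow> (\<forall>A\<in>F. \<forall>B\<in>F. \<forall>C\<in>F.
     (\<forall>x\<in>X. (indicator A x :: real) \<ge> indicator B x + indicator C x) \<longrightarrow> mu A \<ge> mu B + mu C)"

definition co_subadditive :: "'a set \<Rightarrow> 'a set set \<Rightarrow> ('a set \<Rightarrow> real) \<Rightarrow> ('a set \<Rightarrow> real) \<Rightarrow> bool" where
  "co_subadditive X F mum mup \<longleftrightarrow> (\<forall>A\<in>F. \<forall>B\<in>F. \<forall>C\<in>F.
     (\<forall>x\<in>X. (indicator A x :: real) \<le> indicator B x + indicator C x) \<longrightarrow> mum A \<le> mum B + mup C)"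

definition co_superadditive :: "'a set \<Rightarrow> 'a set set \<Rightarrow> ('a set \<Rightarrow> real) \<Rightarrow> ('a set \<Rightarrow> real) \<Rightarrow> bool" where
  "co_superadditive X F mup mum \<longleftrightarrow> (\<forall>A\<in>F. \<forall>B\<in>F. \<forall>C\<in>F.
     (\<forall>x\<in>X. (indicator A x :: real) \<ge> indicator B x + indicator C x) \<longrightarrow> mup A \<ge> mup B + mum C)"

definition normalized_set_fun :: "'a set \<Rightarrow> 'a set set \<Rightarrow> ('a set \<Rightarrow> real) \<Rightarrow> bool" where
  "normalized_set_fun X F mu \<longleftrightarrow> (\<forall>A\<in>F. 0 \<le> mu A \<and> mu A \<le> 1) \<and> mu {} = 0 \<and> mu X = 1"

definition conjugate_pair :: "'a set \<Rightarrow> 'a set set \<Rightarrow> ('a set \<Rightarrow> real) \<Rightarrow> ('a set \<Rightarrow> real) \<Rightarrow> bool" where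
  "conjugate_pair X F mup mum \<longleftrightarrow>
     normalized_set_fun X F mup \<and> normalized_set_fun X F mum \<and>
     subadditive X F mup \<and> superadditive X F mum \<and>
     co_subadditive X F mum mup \<and> co_superadditive X F mup mum"

definition d_mu :: "('a set \<Rightarrow> real) \<Rightarrow> 'a set \<Rightarrow> 'a set \<Rightarrow> real" where
  "d_mu mu A B = mu ((A - B) \<union> (B - A))"

definition complete_wrt :: "'b set \<Rightarrow> ('b \<Rightarrow> 'b \<Rightarrow> real) \<Rightarrow> bool" where
  "complete_wrt E d \<longleftrightarrow> (\<forall>s. (\<forall>n. s n \<in> E) \<and>
      (\<forall>e>0. \<exists>N. \<forall>m\<ge>N. \<forall>n\<ge>N. d (s m) (s n) < e)
      \<longrightarrow> (\<exists>A\<in>E. (\<lambda>n. d (s n) A) \<longlonglongrightarrow> 0))"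

definition net_converges :: "('b \<Rightarrow> 'b \<Rightarrow> real) \<Rightarrow> (nat \<Rightarrow> nat \<Rightarrow> 'b) \<Rightarrow> 'b \<Rightarrow> bool" where
  "net_converges dist_fn f L \<longleftrightarrow> (\<forall>e>0. \<exists>i0 j0. i0 \<le> j0 \<and>
      (\<forall>i j. i \<le> j \<and> i0 \<le> i \<and> j0 \<le> j \<longrightarrow> dist_fn (f i j) L < e))"

definition real_net_converges :: "(nat \<Rightarrow> nat \<Rightarrow> real) \<Rightarrow> real \<Rightarrow> bool" where
  "real_net_converges f L \<longleftrightarrow> net_converges (\<lambda>x y. \<bar>x - y\<bar>) f L"

end

theory Submission
  imports Defs
begin

context
  fixes X :: "'a set" and F :: "'a set set" and mup mum :: "'a set \<Rightarrow> real"
  assumes alg: "algebra X F" and cp: "conjugate_pair X F mup mum"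
begin

lemma FInt: "A \<in> F \<Longrightarrow> B \<in> F \<Longrightarrow> A \<inter> B \<in> F"
proof - interpret algebra X F by (rule alg) show "A \<in> F \<Longrightarrow> B \<in> F \<Longrightarrow> A \<inter> B \<in> F" by blast qed
lemma FDiff: "A \<in> F \<Longrightarrow> B \<in> F \<Longrightarrow> A - B \<in> F"
proof - interpret algebra X F by (rule alg) show "A \<in> F \<Longrightarrow> B \<in> F \<Longrightarrow> A - B \<in> F" by blast qed
lemma FUn: "A \<in> F \<Longrightarrow> B \<in> F \<Longrightarrow> A \<union> B \<in> F"
proof - interpret algebra X F by (rule alg) show "A \<in> F \<Longrightarrow> B \<in> F \<Longrightarrow> A \<union> B \<in> F" by blast qed
lemma Fempty: "{} \<in> F"
proof - interpret algebra X F by (rule alg) show ?thesis by blast qed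
lemma FINT: fixes i j :: nat assumes "\<And>k. As k \<in> F" "i \<le> j" shows "(\<Inter>k\<in>{i..j}. As k) \<in> F"
proof - interpret algebra X F by (rule alg)
  show ?thesis using assms by (intro finite_INT) auto
qed
lemma Fsd: "A \<in> F \<Longrightarrow> B \<in> F \<Longrightarrow> (A - B) \<union> (B - A) \<in> F"
  by (intro FUn FDiff)

lemma mup0: "mup {} = 0" using cp unfolding conjugate_pair_def normalized_set_fun_def by auto
lemma mup_nn: "A \<in> F \<Longrightarrow> 0 \<le> mup A" using cp unfolding conjugate_pair_def normalized_set_fun_def by auto
lemma dnn: "A \<in> F \<Longrightarrow> B \<in> F \<Longrightarrow> 0 \<le> d_mu mup A B" unfolding d_mu_def by (intro mup_nn Fsd)
lemma mum0: "mum {} = 0" using cp unfolding conjugate_pair_def normalized_set_fun_def by auto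

lemma sub: assumes "A \<in> F" "B \<in> F" "C \<in> F" "A \<subseteq> B \<union> C" shows "mup A \<le> mup B + mup C"
proof -
  have "\<forall>x\<in>X. (indicator A x :: real) \<le> indicator B x + indicator C x"
    using assms(4) by (auto simp: indicator_def)
  thus ?thesis using cp assms(1-3) unfolding conjugate_pair_def subadditive_def by blast
qed

lemma cosub: assumes "A \<in> F" "B \<in> F" "C \<in> F" "A \<subseteq> B \<union> C" shows "mum A \<le> mum B + mup C"
proof -
  have "\<forall>x\<in>X. (indicator A x :: real) \<le> indicator B x + indicator C x"
    using assms(4) by (auto simp: indicator_def)
  thus ?thesis using cp assms(1-3) unfolding conjugate_pair_def co_subadditive_def by blast
qed

lemma cosup: assumes "A \<in> F" "B \<in> F" "C \<in> F" "B \<union> C \<subseteq> A" "B \<inter> C = {}"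
  shows "mup A \<ge> mup B + mum C"
proof -
  have "\<forall>x\<in>X. (indicator A x :: real) \<ge> indicator B x + indicator C x"
    using assms(4,5) by (auto simp: indicator_def)
  thus ?thesis using cp assms(1-3) unfolding conjugate_pair_def co_superadditive_def by blast
qed

lemma mono: "A \<in> F \<Longrightarrow> B \<in> F \<Longrightarrow> A \<subseteq> B \<Longrightarrow> mup A \<le> mup B"
  using sub[of A B "{}"] Fempty mup0 by auto

lemma dmono: "P \<in> F \<Longrightarrow> Q \<in> F \<Longrightarrow> R \<in> F \<Longrightarrow> S \<in> F \<Longrightarrow>
   (P - Q) \<union> (Q - P) \<subseteq> (R - S) \<union> (S - R) \<Longrightarrow> d_mu mup P Q \<le> d_mu mup R S"
  unfolding d_mu_def by (intro mono Fsd)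

lemma dtri: "A \<in> F \<Longrightarrow> B \<in> F \<Longrightarrow> C \<in> F \<Longrightarrow> d_mu mup A C \<le> d_mu mup A B + d_mu mup B C"
  unfolding d_mu_def by (intro sub Fsd) auto

lemma dsym: "d_mu mup A B = d_mu mup B A"
  unfolding d_mu_def by (simp add: Un_commute)

lemma dself: "d_mu mup A A = 0"
  unfolding d_mu_def by (simp add: mup0)

lemma dmup: assumes "A \<in> F" "B \<in> F" shows "\<bar>mup A - mup B\<bar> \<le> d_mu mup A B"
proof -
  have "mup A \<le> mup B + d_mu mup A B" unfolding d_mu_def by (intro sub Fsd assms) auto
  moreover have "mup B \<le> mup A + d_mu mup A B" unfolding d_mu_def by (intro sub Fsd assms) auto
  ultimately show ?thesis by linarith
qed

lemma dmum: assumes "A \<in> F" "B \<in> F" shows "\<bar>mum A - mum B\<bar> \<le> d_mu mup A B"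
proof -
  have "mum A \<le> mum B + d_mu mup A B" unfolding d_mu_def by (intro cosub Fsd assms) auto
  moreover have "mum B \<le> mum A + d_mu mup A B" unfolding d_mu_def by (intro cosub Fsd assms) auto
  ultimately show ?thesis by linarith
qed

lemma dsubset: assumes "A \<in> F" "B \<in> F" "A \<subseteq> B" shows "d_mu mup A B \<le> mup B - mum A"
proof -
  have "mup B \<ge> mup (B - A) + mum A" using assms by (intro cosup FDiff) auto
  moreover have "d_mu mup A B = mup (B - A)" unfolding d_mu_def using assms(3)
    by (metis Diff_eq_empty_iff sup_bot.left_neutral)
  ultimately show ?thesis by linarith
qed

end


lemma half_small: "e > 0 \<Longrightarrow> \<exists>k. (1/2::real)^k < e"
  by (rule real_arch_pow_inv) auto

lemma half_mono: "k \<le> m \<Longrightarrow> (1/2::real)^m \<le> (1/2)^k"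
  by (rule power_decreasing) auto

lemma INT_Suc: "i \<le> Suc j \<Longrightarrow> (\<Inter>k\<in>{i..Suc j}. As k) = (\<Inter>k\<in>{i..j}. As k) \<inter> As (Suc j)"
  by (auto simp: atLeastAtMostSuc_conv)

theorem mainTheorem4:
  fixes X :: "'a set" and F E :: "'a set set" and mup mum :: "'a set \<Rightarrow> real"
  assumes "algebra X F"
    and "E \<subseteq> F"
    and "conjugate_pair X F mup mum"
    and "\<forall>A\<in>E. mup A = mum A"
  shows "complete_wrt E (d_mu mup) \<longleftrightarrow>
    (\<forall>As :: nat \<Rightarrow> 'a set. \<forall>L :: real.
       (\<forall>k. As k \<in> E) \<and>
       real_net_converges (\<lambda>i j. mup (\<Inter>k\<in>{i..j}. As k)) L \<and>
       real_net_converges (\<lambda>i j. mum (\<Inter>k\<in>{i..j}. As k)) L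
       \<longrightarrow> (\<exists>A\<in>E. net_converges (d_mu mup) (\<lambda>i j. \<Inter>k\<in>{i..j}. As k) A \<and> mup A = L))"
proof (intro iffI)
  note alg = assms(1) and cp = assms(3)
  note FINT' = FINT[OF alg cp] and dtri' = dtri[OF alg cp] and dsubset' = dsubset[OF alg cp]
    and dmup' = dmup[OF alg cp] and dmum' = dmum[OF alg cp]
    and dself' = dself[OF alg cp] and dmono' = dmono[OF alg cp] and dnn' = dnn[OF alg cp]
    and FInt' = FInt[OF alg cp]
  let ?d = "d_mu mup"
  {
    assume comp: "complete_wrt E ?d"
    show "\<forall>As :: nat \<Rightarrow> 'a set. \<forall>L :: real.
       (\<forall>k. As k \<in> E) \<and>
       real_net_converges (\<lambda>i j. mup (\<Inter>k\<in>{i..j}. As k)) L \<and>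
       real_net_converges (\<lambda>i j. mum (\<Inter>k\<in>{i..j}. As k)) L
       \<longrightarrow> (\<exists>A\<in>E. net_converges (d_mu mup) (\<lambda>i j. \<Inter>k\<in>{i..j}. As k) A \<and> mup A = L)"
    proof (intro allI impI, elim conjE)
      fix As :: "nat \<Rightarrow> 'a set" and L :: real
      assume AsE: "\<forall>k. As k \<in> E"
        and hp: "real_net_converges (\<lambda>i j. mup (\<Inter>k\<in>{i..j}. As k)) L"
        and hm: "real_net_converges (\<lambda>i j. mum (\<Inter>k\<in>{i..j}. As k)) L"
      define C where "C i j = (\<Inter>k\<in>{i..j}. As k)" for i j
      have AsF: "As k \<in> F" for k using AsE assms(2) by auto
      have CF: "i \<le> j \<Longrightarrow> C i j \<in> F" for i j unfolding C_def by (rule FINT') (use AsF in auto)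
      have Cnn: "C n n = As n" for n unfolding C_def by simp
      have Csub: "m \<le> i \<Longrightarrow> j \<le> M \<Longrightarrow> C m M \<subseteq> C i j" for m i j M unfolding C_def by auto
      have hp': "\<forall>e>0. \<exists>i0 j0. i0 \<le> j0 \<and> (\<forall>i j. i \<le> j \<and> i0 \<le> i \<and> j0 \<le> j \<longrightarrow> \<bar>mup (C i j) - L\<bar> < e)"
        using hp unfolding real_net_converges_def net_converges_def C_def by simp
      have hm': "\<forall>e>0. \<exists>i0 j0. i0 \<le> j0 \<and> (\<forall>i j. i \<le> j \<and> i0 \<le> i \<and> j0 \<le> j \<longrightarrow> \<bar>mum (C i j) - L\<bar> < e)"
        using hm unfolding real_net_converges_def net_converges_def C_def by simp
      have cauchy: "\<exists>N. \<forall>i j i' j'. N \<le> i \<and> i \<le> j \<and> N \<le> i' \<and> i' \<le> j' \<longrightarrow> ?d (C i j) (C i' j') < e"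
        if e: "e > 0" for e
      proof -
        obtain i1 j1 where h1: "\<forall>i j. i \<le> j \<and> i1 \<le> i \<and> j1 \<le> j \<longrightarrow> \<bar>mup (C i j) - L\<bar> < e/4"
          using hp' e by (meson divide_pos_pos zero_less_numeral)
        obtain i2 j2 where h2: "\<forall>i j. i \<le> j \<and> i2 \<le> i \<and> j2 \<le> j \<longrightarrow> \<bar>mum (C i j) - L\<bar> < e/4"
          using hm' e by (meson divide_pos_pos zero_less_numeral)
        define N where "N = max (max i1 j1) (max i2 j2)"
        have key: "?d (C i j) (C m M) < e/2" if "N \<le> m" "m \<le> i" "i \<le> j" "j \<le> M" for m i j M
        proof -
          have "?d (C i j) (C m M) = ?d (C m M) (C i j)" by (rule dsym[OF alg cp])
          also have "\<dots> \<le> mup (C i j) - mum (C m M)"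
            using that by (intro dsubset' CF Csub) auto
          also have "\<dots> < e/2"
          proof -
            have "\<bar>mup (C i j) - L\<bar> < e/4" using h1 that unfolding N_def by auto
            moreover have "\<bar>mum (C m M) - L\<bar> < e/4" using h2 that unfolding N_def by auto
            ultimately show ?thesis by linarith
          qed
          finally show ?thesis .
        qed
        show ?thesis
        proof (intro exI allI impI, elim conjE)
          fix i j i' j' assume a: "N \<le> i" "i \<le> j" "N \<le> i'" "i' \<le> j'"
          let ?m = "min i i'" and ?M = "max j j'"
          have "?d (C i j) (C i' j') \<le> ?d (C i j) (C ?m ?M) + ?d (C ?m ?M) (C i' j')"
            using a by (intro dtri' CF) auto
          also have "?d (C ?m ?M) (C i' j') = ?d (C i' j') (C ?m ?M)" by (rule dsym[OF alg cp])
          also have "?d (C i j) (C ?m ?M) + ?d (C i' j') (C ?m ?M) < e/2 + e/2"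
            using key[of ?m i j ?M] key[of ?m i' j' ?M] a by (intro add_strict_mono) auto
          finally show "?d (C i j) (C i' j') < e" by simp
        qed
      qed
      have "\<exists>A\<in>E. (\<lambda>n. ?d (As n) A) \<longlonglongrightarrow> 0"
      proof (rule comp[unfolded complete_wrt_def, rule_format], intro conjI allI impI)
        show "As n \<in> E" for n using AsE by auto
        fix e :: real assume "e > 0"
        then obtain N where "\<forall>i j i' j'. N \<le> i \<and> i \<le> j \<and> N \<le> i' \<and> i' \<le> j' \<longrightarrow> ?d (C i j) (C i' j') < e"
          using cauchy by blast
        then show "\<exists>N. \<forall>m\<ge>N. \<forall>n\<ge>N. ?d (As m) (As n) < e"
          by (metis Cnn order_refl)
      qed
      then obtain A where AE: "A \<in> E" and lim: "(\<lambda>n. ?d (As n) A) \<longlonglongrightarrow> 0" by blast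
      have AF: "A \<in> F" using AE assms(2) by auto
      have lim': "\<exists>N. \<forall>n\<ge>N. ?d (As n) A < e" if "e > 0" for e
        using lim[unfolded LIMSEQ_iff] that by (metis abs_less_iff diff_zero real_norm_def)
      have net: "net_converges ?d C A"
        unfolding net_converges_def
      proof (intro allI impI)
        fix e :: real assume e: "e > 0"
        obtain N where hN: "\<forall>i j i' j'. N \<le> i \<and> i \<le> j \<and> N \<le> i' \<and> i' \<le> j' \<longrightarrow> ?d (C i j) (C i' j') < e/2"
          using cauchy e by (meson half_gt_zero)
        obtain N2 where hN2: "\<forall>n\<ge>N2. ?d (As n) A < e/2" using lim' e by (meson half_gt_zero)
        show "\<exists>i0 j0. i0 \<le> j0 \<and> (\<forall>i j. i \<le> j \<and> i0 \<le> i \<and> j0 \<le> j \<longrightarrow> ?d (C i j) A < e)"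
        proof (intro exI conjI allI impI)
          show "N \<le> max N N2" by simp
          fix i j assume a: "i \<le> j \<and> N \<le> i \<and> max N N2 \<le> j"
          have "?d (C i j) A \<le> ?d (C i j) (C j j) + ?d (C j j) A"
            using a by (intro dtri' CF AF) auto
          also have "\<dots> < e/2 + e/2"
            using hN[rule_format, of i j j j] hN2[rule_format, of j] a Cnn by (intro add_strict_mono) auto
          finally show "?d (C i j) A < e" by simp
        qed
      qed
      have "mup A = L"
      proof (rule ccontr)
        assume ne: "mup A \<noteq> L"
        define e where "e = \<bar>mup A - L\<bar>"
        have e: "e > 0" using ne unfolding e_def by auto
        obtain i1 j1 where h1: "\<forall>i j. i \<le> j \<and> i1 \<le> i \<and> j1 \<le> j \<longrightarrow> \<bar>mup (C i j) - L\<bar> < e/2"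
          using hp' e by (meson half_gt_zero)
        obtain N2 where hN2: "\<forall>n\<ge>N2. ?d (As n) A < e/2" using lim' e by (meson half_gt_zero)
        define n where "n = max (max i1 j1) N2"
        have "\<bar>mup (As n) - mup A\<bar> \<le> ?d (As n) A" using AsF AF by (rule dmup')
        moreover have "?d (As n) A < e/2" using hN2 unfolding n_def by auto
        moreover have "\<bar>mup (As n) - L\<bar> < e/2" using h1[rule_format, of n n] Cnn unfolding n_def by (simp add: le_max_iff_disj)
        ultimately have "\<bar>mup A - L\<bar> < e" by arith
        then show False unfolding e_def by simp
      qed
      then show "\<exists>A\<in>E. net_converges ?d (\<lambda>i j. \<Inter>k\<in>{i..j}. As k) A \<and> mup A = L"
        using AE net unfolding C_def by blast
    qed
  }
  {
    assume P: "\<forall>As :: nat \<Rightarrow> 'a set. \<forall>L :: real.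
       (\<forall>k. As k \<in> E) \<and>
       real_net_converges (\<lambda>i j. mup (\<Inter>k\<in>{i..j}. As k)) L \<and>
       real_net_converges (\<lambda>i j. mum (\<Inter>k\<in>{i..j}. As k)) L
       \<longrightarrow> (\<exists>A\<in>E. net_converges (d_mu mup) (\<lambda>i j. \<Inter>k\<in>{i..j}. As k) A \<and> mup A = L)"
    show "complete_wrt E ?d"
      unfolding complete_wrt_def
    proof (intro allI impI, elim conjE)
      fix s :: "nat \<Rightarrow> 'a set"
      assume sE: "\<forall>n. s n \<in> E" and cs: "\<forall>e>0. \<exists>N. \<forall>m\<ge>N. \<forall>n\<ge>N. ?d (s m) (s n) < e"
      have sF: "s n \<in> F" for n using sE assms(2) by auto
      have "\<forall>k. \<exists>N. \<forall>m\<ge>N. \<forall>n\<ge>N. ?d (s m) (s n) < (1/2)^k" using cs by simp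
      then obtain N where N: "\<And>k m n. N k \<le> m \<Longrightarrow> N k \<le> n \<Longrightarrow> ?d (s m) (s n) < (1/2)^k"
        by metis
      define nn where "nn k = Max (N ` {..k}) + k" for k
      have Nle: "l \<le> k \<Longrightarrow> N l \<le> nn k" for l k
      proof -
        assume "l \<le> k"
        then have "N l \<le> Max (N ` {..k})" by (intro Max_ge) auto
        then show ?thesis unfolding nn_def by simp
      qed
      have nnge: "k \<le> nn k" for k unfolding nn_def by simp
      define A where "A k = s (nn k)" for k
      have AF: "A k \<in> F" for k unfolding A_def by (rule sF)
      have AE: "A k \<in> E" for k unfolding A_def using sE by auto
      have Ad: "k \<le> m \<Longrightarrow> ?d (A k) (A m) < (1/2)^k" for k m
        unfolding A_def by (intro N Nle) auto
      have Ad': "k \<le> m \<Longrightarrow> k \<le> n \<Longrightarrow> ?d (A m) (A n) < (1/2)^k" for k m n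
        unfolding A_def by (intro N Nle) auto
      have "Cauchy (\<lambda>k. mup (A k))"
        unfolding Cauchy_def dist_real_def
      proof (intro allI impI)
        fix e :: real assume "e > 0"
        then obtain k0 where k0: "(1/2::real)^k0 < e" using half_small by blast
        show "\<exists>M. \<forall>m\<ge>M. \<forall>n\<ge>M. \<bar>mup (A m) - mup (A n)\<bar> < e"
        proof (intro exI allI impI)
          fix m n assume "k0 \<le> m" "k0 \<le> n"
          then have "?d (A m) (A n) < (1/2)^k0" by (rule Ad')
          moreover have "\<bar>mup (A m) - mup (A n)\<bar> \<le> ?d (A m) (A n)" by (rule dmup'[OF AF AF])
          ultimately show "\<bar>mup (A m) - mup (A n)\<bar> < e" using k0 by linarith
        qed
      qed
      then obtain L where Llim: "(\<lambda>k. mup (A k)) \<longlonglongrightarrow> L"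
        using Cauchy_convergent_iff convergent_def by blast
      have Llim': "\<exists>N. \<forall>n\<ge>N. \<bar>mup (A n) - L\<bar> < e" if "e > 0" for e
        using Llim[unfolded LIMSEQ_iff] that by (metis real_norm_def)
      define C where "C i j = (\<Inter>k\<in>{i..j}. A k)" for i j
      have CF: "i \<le> j \<Longrightarrow> C i j \<in> F" for i j unfolding C_def by (rule FINT') (use AF in auto)
      have Cb: "?d (C i j) (A i) \<le> 2*(1/2)^i - 2*(1/2)^j" if ij: "i \<le> j" for i j
        using ij
      proof (induction j rule: dec_induct)
        case base
        then show ?case unfolding C_def by (simp add: dself')
      next
        case (step j)
        have CS: "C i (Suc j) = C i j \<inter> A (Suc j)" unfolding C_def using step(1) by (intro INT_Suc) auto
        have Cj: "C i j \<subseteq> A j" unfolding C_def using step(1) by auto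
        have "?d (C i (Suc j)) (A i) \<le> ?d (C i (Suc j)) (C i j) + ?d (C i j) (A i)"
          using step(1) by (intro dtri' CF AF) auto
        also have "?d (C i (Suc j)) (C i j) \<le> ?d (A j) (A (Suc j))"
          unfolding CS using step(1) Cj by (intro dmono' FInt' CF AF) auto
        also have "?d (A j) (A (Suc j)) < (1/2)^j" by (rule Ad) simp
        finally show ?case using step(3) by simp
      qed
      have Cb2: "?d (C i j) (A i) \<le> 2*(1/2)^i" if "i \<le> j" for i j
      proof -
        have "(0::real) \<le> (1/2)^j" by simp
        then show ?thesis using Cb[OF that] by linarith
      qed
      have main0: "\<exists>i0. \<forall>i j. i \<le> j \<and> i0 \<le> i \<longrightarrow> \<bar>mup (C i j) - L\<bar> < e \<and> \<bar>mum (C i j) - L\<bar> < e"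
        if e: "e > 0" for e
      proof -
        obtain k1 where k1: "(1/2::real)^k1 < e/4" using half_small e by (meson divide_pos_pos zero_less_numeral)
        obtain k2 where k2: "\<forall>n\<ge>k2. \<bar>mup (A n) - L\<bar> < e/2" using Llim' e by (meson half_gt_zero)
        define i0 where "i0 = max k1 k2"
        have main: "\<bar>mup (C i j) - L\<bar> < e \<and> \<bar>mum (C i j) - L\<bar> < e" if a: "i \<le> j" "i0 \<le> i" for i j
        proof -
          have "(1/2::real)^i \<le> (1/2)^k1" using a unfolding i0_def by (intro half_mono) auto
          then have b: "?d (C i j) (A i) < e/2" using Cb2[OF a(1)] k1 by linarith
          have c: "\<bar>mup (A i) - L\<bar> < e/2" using k2 a unfolding i0_def by auto
          have "\<bar>mup (C i j) - mup (A i)\<bar> \<le> ?d (C i j) (A i)" by (intro dmup' CF AF a)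
          moreover have "\<bar>mum (C i j) - mum (A i)\<bar> \<le> ?d (C i j) (A i)" by (intro dmum' CF AF a)
          moreover have "mum (A i) = mup (A i)" using assms(4) AE by auto
          ultimately show ?thesis using b c by arith
        qed
        then show ?thesis by blast
      qed
      have netp: "real_net_converges (\<lambda>i j. mup (C i j)) L"
        unfolding real_net_converges_def net_converges_def
      proof (intro allI impI)
        fix e :: real assume "e > 0"
        then obtain i0 where "\<forall>i j. i \<le> j \<and> i0 \<le> i \<longrightarrow> \<bar>mup (C i j) - L\<bar> < e \<and> \<bar>mum (C i j) - L\<bar> < e"
          using main0 by blast
        then show "\<exists>i0 j0. i0 \<le> j0 \<and> (\<forall>i j. i \<le> j \<and> i0 \<le> i \<and> j0 \<le> j \<longrightarrow> \<bar>mup (C i j) - L\<bar> < e)"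
          by blast
      qed
      have netm: "real_net_converges (\<lambda>i j. mum (C i j)) L"
        unfolding real_net_converges_def net_converges_def
      proof (intro allI impI)
        fix e :: real assume "e > 0"
        then obtain i0 where "\<forall>i j. i \<le> j \<and> i0 \<le> i \<longrightarrow> \<bar>mup (C i j) - L\<bar> < e \<and> \<bar>mum (C i j) - L\<bar> < e"
          using main0 by blast
        then show "\<exists>i0 j0. i0 \<le> j0 \<and> (\<forall>i j. i \<le> j \<and> i0 \<le> i \<and> j0 \<le> j \<longrightarrow> \<bar>mum (C i j) - L\<bar> < e)"
          by blast
      qed
      obtain B where BE: "B \<in> E" and Bnet: "net_converges ?d C B"
        using P[rule_format, of A L] AE netp netm unfolding C_def by blast
      have BF: "B \<in> F" using BE assms(2) by auto
      show "\<exists>A\<in>E. (\<lambda>n. ?d (s n) A) \<longlonglongrightarrow> 0"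
      proof (intro bexI[OF _ BE] LIMSEQ_I)
        fix e :: real assume e: "e > 0"
        obtain k where k: "(1/2::real)^k < e/4" using half_small e by (meson divide_pos_pos zero_less_numeral)
        obtain i0 j0 where ij0: "\<forall>i j. i \<le> j \<and> i0 \<le> i \<and> j0 \<le> j \<longrightarrow> ?d (C i j) B < e/4"
          using Bnet e unfolding net_converges_def by (meson divide_pos_pos zero_less_numeral)
        define i where "i = max k i0"
        define j where "j = max i j0"
        have ij: "i \<le> j" unfolding j_def by simp
        have "(1/2::real)^i \<le> (1/2)^k" unfolding i_def by (intro half_mono) auto
        then have h1: "?d (C i j) (A i) < e/2" using Cb2[OF ij] k by linarith
        have h2: "?d (C i j) B < e/4" using ij0 unfolding i_def j_def by auto
        have "?d (A i) B \<le> ?d (A i) (C i j) + ?d (C i j) B" by (intro dtri' AF CF BF ij)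
        also have "?d (A i) (C i j) = ?d (C i j) (A i)" by (rule dsym[OF alg cp])
        finally have h3: "?d (A i) B < 3*e/4" using h1 h2 by linarith
        show "\<exists>no. \<forall>n\<ge>no. norm (?d (s n) B - 0) < e"
        proof (intro exI allI impI)
          fix n assume n: "N k \<le> n"
          have "?d (s n) (A i) < (1/2)^k" unfolding A_def using n by (intro N Nle) (auto simp: i_def)
          moreover have "?d (s n) B \<le> ?d (s n) (A i) + ?d (A i) B" by (intro dtri' sF AF BF)
          moreover have "0 \<le> ?d (s n) B" by (intro dnn' sF BF)
          ultimately show "norm (?d (s n) B - 0) < e" using h3 k by simp
        qed
      qed
    qed
  }
qed

end
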